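(* Let $\Lambda$ be quasi-lacunary. There exist $A>0$ and $\eta>0$ such that for every $k\geqslant0$ and every $f\in F_k$ satisfying $A\frac{\|f\|_\infty}{\|f'\|_\infty}\leqslant\eta$, every point $x_0\in[0,1]$ with $|f(x_0)|=\|f\|_\infty$ satisfies \[1-A\frac{\|f\|_\infty}{\|f'\|_\infty}\leqslant x_0\leqslant1.\]
   Context: $\Lambda=(\lambda_k)_{k\geqslant0}$ is an increasing sequence of positive reals with $\sum_k1/\lambda_k<\infty$. $\Lambda$ is quasi-lacunary with parameters $q>1$, $N\geqslant1$ if $\Lambda$ is partitioned into consecutive disjoint blocks $E_k=\{\lambda_j: n_k\leqslant j<n_{k+1}\}$ ($0=n_0<n_1<\dots$) with $\#E_k\leqslant N$ and $q\leqslant\lambda_{n_{k+1}}/\lambda_{n_k}\leqslant q^{2N}$. $F_k=\operatorname{Span}\{t^\lambda:\lambda\in E_k\}$ as functions on $[0,1]$; $\|\cdot\|_\infty$ is the sup norm on $[0,1]$. *)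

theory Defs
  imports "HOL-Analysis.Analysis"
begin

definition muntz_seq :: "(nat \<Rightarrow> real) \<Rightarrow> bool" where
  "muntz_seq lam \<longleftrightarrow> strict_mono lam \<and> (\<forall>k. 0 < lam k) \<and> summable (\<lambda>k. 1 / lam k)"

text \<open>Quasi-lacunarity with parameters q, N and block boundaries n:
  the k-th block is E_k = {lam j : n k \<le> j < n (k+1)}.\<close>
definition quasi_lacunary ::
  "(nat \<Rightarrow> real) \<Rightarrow> real \<Rightarrow> nat \<Rightarrow> (nat \<Rightarrow> nat) \<Rightarrow> bool" where
  "quasi_lacunary lam q N n \<longleftrightarrow>
     q > 1 \<and> N \<ge> 1 \<and> n 0 = 0 \<and> strict_mono n \<and>
     (\<forall>k. n (Suc k) - n k \<le> N) \<and>
     (\<forall>k. q \<le> lam (n (Suc k)) / lam (n k) \<and> lam (n (Suc k)) / lam (n k) \<le> q ^ (2 * N))"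

text \<open>The element of F_k with coefficients c: t \<mapsto> sum of c j * t^(lam j) over the block.\<close>
definition block_fun :: "(nat \<Rightarrow> real) \<Rightarrow> (nat \<Rightarrow> nat) \<Rightarrow> nat \<Rightarrow> (nat \<Rightarrow> real) \<Rightarrow> real \<Rightarrow> real" where
  "block_fun lam n k c = (\<lambda>t. \<Sum>j\<in>{n k..<n (Suc k)}. c j * t powr lam j)"

definition sup_norm01 :: "(real \<Rightarrow> real) \<Rightarrow> real" where
  "sup_norm01 g = (SUP t\<in>{0..1}. \<bar>g t\<bar>)"

end

theory Submission
  imports Defs "HOL-Real_Asymp.Real_Asymp"
begin

definition es :: "(nat \<Rightarrow> real) \<Rightarrow> (nat \<Rightarrow> real) \<Rightarrow> nat \<Rightarrow> real \<Rightarrow> real" where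
  "es c mu m u = (\<Sum>j<m. c j * exp (- (mu j) * u))"

lemma es_deriv: "(es c mu m has_real_derivative es (\<lambda>j. - c j * mu j) mu m u) (at u)"
  unfolding es_def
  by (auto intro!: derivative_eq_intros sum.cong simp: algebra_simps)

lemma es_cont: "continuous_on S (es c mu m)"
  using es_deriv by (meson DERIV_continuous continuous_at_imp_continuous_on)

lemma lip_deriv:
  fixes f f' :: "real \<Rightarrow> real"
  assumes "\<And>z. z \<in> {x..y} \<Longrightarrow> (f has_real_derivative f' z) (at z)"
    and "\<And>z. z \<in> {x..y} \<Longrightarrow> \<bar>f' z\<bar> \<le> K"
    and "v \<in> {x..y}" "w \<in> {x..y}"
  shows "\<bar>f v - f w\<bar> \<le> K * \<bar>v - w\<bar>"
proof -
  have main: "\<bar>f b - f a\<bar> \<le> K * (b - a)" if "a < b" "a \<in> {x..y}" "b \<in> {x..y}" for a b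
  proof -
    have "\<exists>z>a. z < b \<and> f b - f a = (b - a) * f' z"
      by (rule MVT2) (use that in \<open>auto intro!: assms(1)\<close>)
    then obtain z where z: "a < z" "z < b" "f b - f a = (b - a) * f' z" by auto
    have "z \<in> {x..y}" using z that by auto
    then have "\<bar>f' z\<bar> \<le> K" using assms(2) by auto
    then show ?thesis using z that
      by (simp add: abs_mult mult_left_mono)
  qed
  show ?thesis
  proof (cases "v < w")
    case True then show ?thesis using main[of v w] assms by (simp add: abs_minus_commute)
  next
    case False
    then show ?thesis using main[of w v] assms by (cases "v = w") auto
  qed
qed


lemma es_Suc: "es c mu (Suc m) u = es c mu m u + c m * exp (- mu m * u)"
  by (simp add: es_def)

lemma LM:
  assumes "0 < L"
  shows "\<exists>C\<ge>0. \<forall>a c mu B. (\<forall>j<m. \<bar>mu j\<bar> \<le> R) \<longrightarrow> (\<forall>u\<in>{a..a+L}. \<bar>es c mu m u\<bar> \<le> B) \<longrightarrow>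
           (\<forall>u\<in>{a..a+L}. \<bar>es (\<lambda>j. - c j * mu j) mu m u\<bar> \<le> C * B)"
proof (induction m arbitrary: R)
  case 0
  show ?case by (rule exI[of _ 0]) (simp add: es_def)
next
  case (Suc m)
  obtain C1 where C1: "C1 \<ge> 0" and H: "\<And>a c mu B. (\<forall>j<m. \<bar>mu j\<bar> \<le> 2 * \<bar>R\<bar>) \<Longrightarrow> (\<forall>u\<in>{a..a+L}. \<bar>es c mu m u\<bar> \<le> B) \<Longrightarrow>
           (\<forall>u\<in>{a..a+L}. \<bar>es (\<lambda>j. - c j * mu j) mu m u\<bar> \<le> C1 * B)"
    using Suc.IH[of "2 * \<bar>R\<bar>"] by blast
  define l where "l = min L (1 / (2 * C1 + 1))"
  have lpos: "l > 0" using assms C1 by (simp add: l_def)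
  have lL: "l \<le> L" by (simp add: l_def)
  have C1l: "C1 * l \<le> 1/2"
  proof -
    have "C1 * l \<le> C1 * (1 / (2 * C1 + 1))" using C1 by (intro mult_left_mono) (auto simp: l_def)
    also have "\<dots> \<le> 1/2" using C1 by (simp add: field_simps)
    finally show ?thesis .
  qed
  define C where "C = \<bar>R\<bar> + 4 * exp (2 * \<bar>R\<bar> * L) / l"
  have "C \<ge> 0" using lpos by (simp add: C_def)
  moreover have "\<forall>u\<in>{a..a+L}. \<bar>es (\<lambda>j. - c j * mu j) mu (Suc m) u\<bar> \<le> C * B"
    if hmu: "\<forall>j<Suc m. \<bar>mu j\<bar> \<le> R" and hG: "\<forall>u\<in>{a..a+L}. \<bar>es c mu (Suc m) u\<bar> \<le> B" for a c mu B
  proof -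
    define nu where "nu = mu m"
    have nuR: "\<bar>nu\<bar> \<le> \<bar>R\<bar>" using hmu by (auto simp: nu_def)
    define mu' where "mu' = (\<lambda>j. mu j - nu)"
    define w where "w = (\<lambda>j. c j * exp (- nu * a))"
    define d where "d = (\<lambda>j. - w j * mu' j)"
    define W where "W = es w mu' (Suc m)"
    define V where "V = es d mu' m"
    define V' where "V' = es (\<lambda>j. - d j * mu' j) mu' m"
    have B0: "B \<ge> 0" using hG[rule_format, of a] assms by auto
    have Wid: "W u = exp (nu * (u - a)) * es c mu (Suc m) u" for u
      unfolding W_def es_def w_def mu'_def sum_distrib_left
      by (rule sum.cong) (auto simp: algebra_simps simp flip: exp_add)
    have WV: "(W has_real_derivative V u) (at u)" for u
    proof -
      have "es (\<lambda>j. - w j * mu' j) mu' (Suc m) u = V u"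
        by (simp add: es_Suc V_def d_def mu'_def nu_def)
      then show ?thesis using es_deriv[of w mu' "Suc m" u] by (simp add: W_def)
    qed
    have VV: "(V has_real_derivative V' u) (at u)" for u
      unfolding V_def V'_def by (rule es_deriv)
    have Gid: "es (\<lambda>j. - c j * mu j) mu (Suc m) u = - nu * es c mu (Suc m) u + exp (- nu * (u - a)) * V u" for u
    proof -
      have "exp (- nu * (u - a)) * V u = (\<Sum>j<m. c j * (nu - mu j) * exp (- mu j * u))"
        unfolding V_def es_def sum_distrib_left d_def w_def mu'_def
        by (rule sum.cong) (auto simp: algebra_simps simp flip: exp_add)
      moreover have "(\<Sum>j<m. c j * (nu - mu j) * exp (- mu j * u)) = nu * (\<Sum>j<m. c j * exp (- mu j * u)) - (\<Sum>j<m. c j * mu j * exp (- mu j * u))"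
        by (simp add: sum_distrib_left sum_subtractf[symmetric] algebra_simps)
      moreover have "es (\<lambda>j. - c j * mu j) mu (Suc m) u = - (\<Sum>j<m. c j * mu j * exp (- mu j * u)) - c m * mu m * exp (- mu m * u)"
        by (simp add: es_def sum_negf)
      moreover have "es c mu (Suc m) u = (\<Sum>j<m. c j * exp (- mu j * u)) + c m * exp (- mu m * u)"
        by (simp add: es_def)
      ultimately show ?thesis by (simp add: nu_def algebra_simps)
    qed
    have mu'b: "\<forall>j<m. \<bar>mu' j\<bar> \<le> 2 * \<bar>R\<bar>"
    proof (intro allI impI)
      fix j assume "j < m"
      then have "\<bar>mu j\<bar> \<le> R" using hmu by auto
      then show "\<bar>mu' j\<bar> \<le> 2 * \<bar>R\<bar>" using nuR by (simp add: mu'_def abs_le_iff)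
    qed
    have Wb: "\<bar>W u\<bar> \<le> exp (\<bar>R\<bar> * L) * B" if "u \<in> {a..a+L}" for u
    proof -
      have "nu * (u - a) \<le> \<bar>R\<bar> * L"
      proof -
        have "nu * (u - a) \<le> \<bar>nu\<bar> * (u - a)" using that by (intro mult_right_mono) auto
        also have "\<dots> \<le> \<bar>R\<bar> * L" using that nuR by (intro mult_mono) auto
        finally show ?thesis .
      qed
      then have "exp (nu * (u - a)) \<le> exp (\<bar>R\<bar> * L)" by simp
      moreover have "\<bar>es c mu (Suc m) u\<bar> \<le> B" using hG that by auto
      ultimately show ?thesis unfolding Wid abs_mult
        by (intro mult_mono) auto
    qed
    have "\<exists>u1\<in>{a..a+L}. \<forall>v\<in>{a..a+L}. \<bar>V v\<bar> \<le> \<bar>V u1\<bar>"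
      using assms unfolding V_def
      by (intro continuous_attains_sup continuous_on_rabs es_cont) auto
    then obtain u1 where u1: "u1 \<in> {a..a+L}" and u1max: "\<And>v. v \<in> {a..a+L} \<Longrightarrow> \<bar>V v\<bar> \<le> \<bar>V u1\<bar>" by blast
    define S where "S = \<bar>V u1\<bar>"
    have V'b: "\<forall>v\<in>{a..a+L}. \<bar>V' v\<bar> \<le> C1 * S"
      unfolding V'_def
      by (rule H[OF mu'b]) (use u1max in \<open>auto simp: S_def V_def\<close>)
    have SB: "S \<le> 4 * exp (\<bar>R\<bar> * L) * B / l"
    proof -
      obtain x where x: "a \<le> x" "x + l \<le> a + L" "u1 \<in> {x..x+l}"
      proof (cases "u1 + l \<le> a + L")
        case True then show ?thesis using that[of u1] u1 lpos by auto
      next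
        case False then show ?thesis using that[of "a + L - l"] u1 lL by auto
      qed
      have sub: "{x..x+l} \<subseteq> {a..a+L}" using x by auto
      have u1x: "u1 \<in> {x..x+l}" using x by auto
      have Vclose: "\<bar>V v - V u1\<bar> \<le> S / 2" if "v \<in> {x..x+l}" for v
      proof -
        have "\<bar>V v - V u1\<bar> \<le> (C1 * S) * \<bar>v - u1\<bar>"
          by (rule lip_deriv[of x "x+l" V V']) (use VV V'b sub that u1x in auto)
        also have "\<dots> \<le> (C1 * S) * l"
          using that u1x C1 by (intro mult_left_mono) (auto simp: S_def)
        also have "\<dots> = S * (C1 * l)" by simp
        also have "\<dots> \<le> S * (1/2)" using C1l by (intro mult_left_mono) (auto simp: S_def)
        finally show ?thesis by simp
      qed
      have "\<exists>z>x. z < x + l \<and> W (x + l) - W x = (x + l - x) * V z"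
        by (rule MVT2) (use lpos WV in auto)
      then obtain z where z: "x < z" "z < x + l" "W (x + l) - W x = l * V z" by auto
      have "\<bar>V z - V u1\<bar> \<le> S / 2" using Vclose[of z] z by auto
      then have "S / 2 \<le> \<bar>V z\<bar>" unfolding S_def by linarith
      then have "l * (S / 2) \<le> l * \<bar>V z\<bar>" using lpos by simp
      also have "\<dots> = \<bar>W (x + l) - W x\<bar>" using z lpos by (simp add: abs_mult)
      also have "\<dots> \<le> \<bar>W (x + l)\<bar> + \<bar>W x\<bar>" by simp
      also have "\<dots> \<le> 2 * (exp (\<bar>R\<bar> * L) * B)"
        using Wb[of x] Wb[of "x+l"] sub lpos by auto
      finally have "l * S \<le> 4 * exp (\<bar>R\<bar> * L) * B" by simp
      then show ?thesis using lpos by (simp add: field_simps)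
    qed
    show ?thesis
    proof
      fix u assume u: "u \<in> {a..a+L}"
      have e1: "exp (- nu * (u - a)) \<le> exp (\<bar>R\<bar> * L)"
      proof -
        have "- nu * (u - a) \<le> \<bar>nu\<bar> * (u - a)" using u by (intro mult_right_mono) auto
        also have "\<dots> \<le> \<bar>R\<bar> * L" using u nuR by (intro mult_mono) auto
        finally show ?thesis by simp
      qed
      have "\<bar>es (\<lambda>j. - c j * mu j) mu (Suc m) u\<bar> \<le> \<bar>nu\<bar> * \<bar>es c mu (Suc m) u\<bar> + exp (- nu * (u - a)) * \<bar>V u\<bar>"
        unfolding Gid using abs_triangle_ineq[of "- nu * es c mu (Suc m) u" "exp (- nu * (u - a)) * V u"]
        by (simp add: abs_mult)
      also have "\<dots> \<le> \<bar>R\<bar> * B + exp (\<bar>R\<bar> * L) * S"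
        using hG u nuR e1 u1max[OF u] by (intro add_mono mult_mono) (auto simp: S_def)
      also have "\<dots> \<le> \<bar>R\<bar> * B + exp (\<bar>R\<bar> * L) * (4 * exp (\<bar>R\<bar> * L) * B / l)"
        using SB by (intro add_mono mult_left_mono) auto
      also have "\<dots> = C * B" by (simp add: C_def algebra_simps mult_exp_exp)
      finally show "\<bar>es (\<lambda>j. - c j * mu j) mu (Suc m) u\<bar> \<le> C * B" .
    qed
  qed
  ultimately show ?case by blast
qed


lemma es_insert:
  assumes "finite S" "i \<notin> S"
  shows "es (\<lambda>j. c j * (\<Prod>l\<in>insert i S. (mu l - mu j))) mu m u =
         es (\<lambda>j. - (c j * (\<Prod>l\<in>S. (mu l - mu j))) * mu j) mu m u + mu i * es (\<lambda>j. c j * (\<Prod>l\<in>S. (mu l - mu j))) mu m u"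
  using assms unfolding es_def sum_distrib_left sum.distrib[symmetric]
  by (intro sum.cong) (auto simp: algebra_simps)

lemma CB:
  "\<exists>K\<ge>0. \<forall>a c mu B S. finite S \<longrightarrow> S \<subseteq> {..<m} \<longrightarrow> (\<forall>j<m. \<bar>mu j\<bar> \<le> R) \<longrightarrow>
      (\<forall>u\<in>{a..a+1}. \<bar>es c mu m u\<bar> \<le> B) \<longrightarrow>
      (\<forall>u\<in>{a..a+1}. \<bar>es (\<lambda>j. c j * (\<Prod>l\<in>S. (mu l - mu j))) mu m u\<bar> \<le> K ^ card S * B)"
proof -
  obtain C where C: "C \<ge> 0" and HC: "\<And>a c mu B. (\<forall>j<m. \<bar>mu j\<bar> \<le> R) \<Longrightarrow> (\<forall>u\<in>{a..a+1}. \<bar>es c mu m u\<bar> \<le> B) \<Longrightarrow>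
           (\<forall>u\<in>{a..a+1}. \<bar>es (\<lambda>j. - c j * mu j) mu m u\<bar> \<le> C * B)"
    using LM[of 1 m R] by auto
  define K where "K = C + \<bar>R\<bar>"
  have "K \<ge> 0" using C by (simp add: K_def)
  moreover have "\<forall>u\<in>{a..a+1}. \<bar>es (\<lambda>j. c j * (\<Prod>l\<in>S. (mu l - mu j))) mu m u\<bar> \<le> K ^ card S * B"
    if fS: "finite S" and Sm: "S \<subseteq> {..<m}" and hmu: "\<forall>j<m. \<bar>mu j\<bar> \<le> R"
      and hB: "\<forall>u\<in>{a..a+1}. \<bar>es c mu m u\<bar> \<le> B" for a c mu B S
    using fS Sm
  proof (induction S rule: finite_induct)
    case empty
    then show ?case using hB by simp
  next
    case (insert i S)
    have IH: "\<forall>u\<in>{a..a+1}. \<bar>es (\<lambda>j. c j * (\<Prod>l\<in>S. (mu l - mu j))) mu m u\<bar> \<le> K ^ card S * B"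
      using insert by auto
    have D: "\<forall>u\<in>{a..a+1}. \<bar>es (\<lambda>j. - (c j * (\<Prod>l\<in>S. (mu l - mu j))) * mu j) mu m u\<bar> \<le> C * (K ^ card S * B)"
      by (rule HC[OF hmu IH])
    have mui: "\<bar>mu i\<bar> \<le> \<bar>R\<bar>" using insert.prems hmu by auto
    show ?case
    proof
      fix u assume u: "u \<in> {a..a+1}"
      have B0: "0 \<le> K ^ card S * B" using IH u by (meson abs_ge_zero order_trans)
      have "\<bar>es (\<lambda>j. c j * (\<Prod>l\<in>insert i S. (mu l - mu j))) mu m u\<bar>
          \<le> \<bar>es (\<lambda>j. - (c j * (\<Prod>l\<in>S. (mu l - mu j))) * mu j) mu m u\<bar> + \<bar>mu i\<bar> * \<bar>es (\<lambda>j. c j * (\<Prod>l\<in>S. (mu l - mu j))) mu m u\<bar>"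
        unfolding es_insert[OF insert.hyps] by (simp add: abs_mult abs_triangle_ineq[THEN order_trans])
      also have "\<dots> \<le> C * (K ^ card S * B) + \<bar>R\<bar> * (K ^ card S * B)"
        using D u IH mui by (intro add_mono mult_mono) auto
      also have "\<dots> = K ^ card (insert i S) * B" using insert.hyps by (simp add: K_def algebra_simps)
      finally show "\<bar>es (\<lambda>j. c j * (\<Prod>l\<in>insert i S. (mu l - mu j))) mu m u\<bar> \<le> K ^ card (insert i S) * B" .
    qed
  qed
  ultimately show ?thesis by blast
qed

lemma decay_step:
  fixes h h' :: "real \<Rightarrow> real"
  assumes hd: "\<And>u. (h has_real_derivative h' u) (at u)" and nu: "nu \<ge> 1" and K0: "K \<ge> 0"
    and hb: "\<And>u. u \<ge> 0 \<Longrightarrow> \<bar>h' u + nu * h u\<bar> \<le> K * exp (- u / 2)"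
    and u: "u \<ge> 0"
  shows "\<bar>h u\<bar> \<le> (\<bar>h 0\<bar> + 2 * K) * exp (- u / 2)"
proof -
  define Z where "Z = (\<lambda>u. exp (nu * u) * h u)"
  define Z' where "Z' = (\<lambda>u. exp (nu * u) * (h' u + nu * h u))"
  define nh where "nh = nu - 1/2"
  define Y where "Y = (\<lambda>u. K * exp (nh * u) / nh)"
  define Y' where "Y' = (\<lambda>u. K * exp (nh * u))"
  have Zd: "(Z has_real_derivative Z' x) (at x)" for x
    unfolding Z_def Z'_def by (auto intro!: derivative_eq_intros hd simp: algebra_simps)
  have Yd: "(Y has_real_derivative Y' x) (at x)" for x
  proof -
    have ne: "nh \<noteq> 0" using nu by (simp add: nh_def)
    show ?thesis unfolding Y_def Y'_def
      apply (rule derivative_eq_intros refl)+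
      using ne apply (simp_all add: ne)
      done
  qed
  have ZY: "\<bar>Z' x\<bar> \<le> Y' x" if "x \<ge> 0" for x
  proof -
    have "\<bar>Z' x\<bar> = exp (nu * x) * \<bar>h' x + nu * h x\<bar>" by (simp add: Z'_def abs_mult)
    also have "\<dots> \<le> exp (nu * x) * (K * exp (- x / 2))" using hb[OF that] by (intro mult_left_mono) auto
    also have "\<dots> = Y' x" by (simp add: Y'_def nh_def mult_exp_exp algebra_simps flip: exp_add)
    finally show ?thesis .
  qed
  have Y0: "Y x \<ge> 0" for x using nu K0 by (simp add: Y_def nh_def)
  have bound: "\<bar>Z u\<bar> \<le> \<bar>Z 0\<bar> + Y u"
  proof (cases "u = 0")
    case True then show ?thesis using Y0 by simp
  next
    case False
    then have up: "0 < u" using u by simp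
    have "\<exists>z>0. z < u \<and> (\<lambda>x. Z x - Y x) u - (\<lambda>x. Z x - Y x) 0 = (u - 0) * (Z' z - Y' z)"
      by (rule MVT2) (use up in \<open>auto intro!: derivative_eq_intros Zd Yd\<close>)
    then obtain z1 where z1: "0 < z1" "Z u - Y u - (Z 0 - Y 0) = u * (Z' z1 - Y' z1)" by auto
    have "\<exists>z>0. z < u \<and> (\<lambda>x. Z x + Y x) u - (\<lambda>x. Z x + Y x) 0 = (u - 0) * (Z' z + Y' z)"
      by (rule MVT2) (use up in \<open>auto intro!: derivative_eq_intros Zd Yd\<close>)
    then obtain z2 where z2: "0 < z2" "Z u + Y u - (Z 0 + Y 0) = u * (Z' z2 + Y' z2)" by auto
    have "u * (Z' z1 - Y' z1) \<le> 0" using ZY[of z1] z1 up by (intro mult_nonneg_nonpos) auto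
    moreover have "u * (Z' z2 + Y' z2) \<ge> 0" using ZY[of z2] z2 up by (intro mult_nonneg_nonneg) auto
    ultimately show ?thesis using z1 z2 Y0[of 0] Y0[of u] by linarith
  qed
  have "\<bar>h u\<bar> = exp (- nu * u) * \<bar>Z u\<bar>"
    by (simp add: Z_def abs_mult mult.assoc flip: exp_add)
  also have "\<dots> \<le> exp (- nu * u) * (\<bar>h 0\<bar> + Y u)"
    using bound by (intro mult_left_mono) (auto simp: Z_def)
  also have "\<dots> = exp (- nu * u) * \<bar>h 0\<bar> + K * exp (- u / 2) / (nu - 1/2)"
    by (simp add: Y_def nh_def algebra_simps mult_exp_exp flip: exp_add)
  also have "\<dots> \<le> exp (- u / 2) * \<bar>h 0\<bar> + K * exp (- u / 2) * 2"
  proof (intro add_mono mult_right_mono)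
    have "1 * u \<le> nu * u" using nu u by (intro mult_right_mono) auto
    then have "u \<le> nu * u * 2" using u by linarith
    then show "exp (- nu * u) \<le> exp (- u / 2)" by simp
    have "K * exp (- u / 2) / (nu - 1/2) \<le> K * exp (- u / 2) / (1/2)"
      using nu K0 by (intro divide_left_mono) auto
    then show "K * exp (- u / 2) / (nu - 1/2) \<le> K * exp (- u / 2) * 2" by simp
  qed auto
  also have "\<dots> = (\<bar>h 0\<bar> + 2 * K) * exp (- u / 2)" by (simp add: algebra_simps)
  finally show ?thesis .
qed


lemma decay:
  assumes Q: "Q \<ge> 1"
  shows "\<exists>K\<ge>0. \<forall>c mu B. (\<forall>j<m. 1 \<le> mu j \<and> mu j \<le> Q) \<longrightarrow> (\<forall>u\<ge>0. \<bar>es c mu m u\<bar> \<le> B) \<longrightarrow>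
            (\<forall>u\<ge>0. \<bar>es c mu m u\<bar> \<le> K * B * exp (- u / 2))"
proof -
  obtain K0 where K0: "K0 \<ge> 0" and HK0: "\<And>a c mu B S. finite S \<Longrightarrow> S \<subseteq> {..<m} \<Longrightarrow> (\<forall>j<m. \<bar>mu j\<bar> \<le> Q) \<Longrightarrow>
      (\<forall>u\<in>{a..a+1}. \<bar>es c mu m u\<bar> \<le> B) \<Longrightarrow>
      (\<forall>u\<in>{a..a+1}. \<bar>es (\<lambda>j. c j * (\<Prod>l\<in>S. (mu l - mu j))) mu m u\<bar> \<le> K0 ^ card S * B)"
    using CB[of m Q] by blast
  define H where "H = (\<lambda>c mu k. es (\<lambda>j. c j * (\<Prod>l\<in>{..<k}. (mu l - mu j))) mu m)"
  have P: "\<exists>K\<ge>0. \<forall>c mu B. (\<forall>j<m. 1 \<le> mu j \<and> mu j \<le> Q) \<longrightarrow> (\<forall>u\<ge>0. \<bar>es c mu m u\<bar> \<le> B) \<longrightarrow>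
            (\<forall>u\<ge>0. \<bar>H c mu (m - d) u\<bar> \<le> K * B * exp (- u / 2))" if "d \<le> m" for d
    using that
  proof (induction d)
    case 0
    have "H c mu m u = 0" for c mu u
      unfolding H_def es_def by (intro sum.neutral) auto
    then show ?case by (intro exI[of _ 0]) auto
  next
    case (Suc d)
    obtain K' where K': "K' \<ge> 0" and HK': "\<And>c mu B. (\<forall>j<m. 1 \<le> mu j \<and> mu j \<le> Q) \<Longrightarrow> (\<forall>u\<ge>0. \<bar>es c mu m u\<bar> \<le> B) \<Longrightarrow>
            (\<forall>u\<ge>0. \<bar>H c mu (m - d) u\<bar> \<le> K' * B * exp (- u / 2))"
      using Suc by auto
    define k where "k = m - Suc d"
    have km: "k < m" and kd: "Suc k = m - d" using Suc.prems by (auto simp: k_def)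
    have "\<forall>u\<ge>0. \<bar>H c mu k u\<bar> \<le> (K0 ^ k + 2 * K') * B * exp (- u / 2)"
      if hmu: "\<forall>j<m. 1 \<le> mu j \<and> mu j \<le> Q" and hB: "\<forall>u\<ge>0. \<bar>es c mu m u\<bar> \<le> B" for c mu B
    proof (intro allI impI)
      fix u :: real assume u: "u \<ge> 0"
      have B0: "B \<ge> 0" using hB[rule_format, of 0] by auto
      have hmu': "\<forall>j<m. \<bar>mu j\<bar> \<le> Q" using hmu by auto
      have h0: "\<bar>H c mu k 0\<bar> \<le> K0 ^ k * B"
        using HK0[of "{..<k}" mu 0 c B] km hmu' hB unfolding H_def by auto
      have step: "\<bar>es (\<lambda>j. - (c j * (\<Prod>l\<in>{..<k}. (mu l - mu j))) * mu j) mu m v + mu k * H c mu k v\<bar> \<le> (K' * B) * exp (- v / 2)"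
        if "v \<ge> 0" for v
      proof -
        have "es (\<lambda>j. - (c j * (\<Prod>l\<in>{..<k}. (mu l - mu j))) * mu j) mu m v + mu k * H c mu k v = H c mu (m - d) v"
          unfolding H_def kd[symmetric] lessThan_Suc by (rule es_insert[symmetric]) auto
        then show ?thesis using HK'[OF hmu hB] that by auto
      qed
      have "\<bar>H c mu k u\<bar> \<le> (\<bar>H c mu k 0\<bar> + 2 * (K' * B)) * exp (- u / 2)"
        by (rule decay_step[where h' = "es (\<lambda>j. - (c j * (\<Prod>l\<in>{..<k}. (mu l - mu j))) * mu j) mu m" and nu = "mu k"])
           (use es_deriv hmu km step u K' B0 in \<open>auto simp: H_def\<close>)
      also have "\<dots> \<le> (K0 ^ k * B + 2 * (K' * B)) * exp (- u / 2)"
        using h0 by (intro mult_right_mono) auto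
      finally show "\<bar>H c mu k u\<bar> \<le> (K0 ^ k + 2 * K') * B * exp (- u / 2)" by (simp add: algebra_simps)
    qed
    moreover have "K0 ^ k + 2 * K' \<ge> 0" using K0 K' by simp
    ultimately show ?case unfolding k_def by blast
  qed
  obtain K where "K \<ge> 0" and HK: "\<And>c mu B. (\<forall>j<m. 1 \<le> mu j \<and> mu j \<le> Q) \<Longrightarrow> (\<forall>u\<ge>0. \<bar>es c mu m u\<bar> \<le> B) \<Longrightarrow>
            (\<forall>u\<ge>0. \<bar>H c mu 0 u\<bar> \<le> K * B * exp (- u / 2))"
    using P[of m] by auto
  moreover have "H c mu 0 = es c mu m" for c mu by (simp add: H_def)
  ultimately show ?thesis by metis
qed


lemma lip01:
  fixes g d :: "real \<Rightarrow> real"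
  assumes cont: "continuous_on {0..1} g"
    and der: "\<And>t. 0 < t \<Longrightarrow> t < 1 \<Longrightarrow> (g has_real_derivative d t) (at t)"
    and db: "\<And>t. 0 < t \<Longrightarrow> t < 1 \<Longrightarrow> \<bar>d t\<bar> \<le> E"
    and x: "x \<in> {0..1}" and y: "y \<in> {0..1}"
  shows "\<bar>g x - g y\<bar> \<le> E * \<bar>x - y\<bar>"
proof -
  have main: "\<bar>g b - g a\<bar> \<le> E * (b - a)" if "a < b" "a \<in> {0..1}" "b \<in> {0..1}" for a b
  proof -
    have "\<exists>l z. a < z \<and> z < b \<and> (g has_real_derivative l) (at z) \<and> g b - g a = (b - a) * l"
    proof (rule MVT)
      show "a < b" by fact
      show "continuous_on {a..b} g" using that by (intro continuous_on_subset[OF cont]) auto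
      fix z assume "a < z" "z < b"
      then have "(g has_real_derivative d z) (at z)" using der that by auto
      then show "g differentiable at z" using real_differentiable_def by blast
    qed
    then obtain l z where z: "a < z" "z < b" "(g has_real_derivative l) (at z)" "g b - g a = (b - a) * l" by blast
    have "l = d z" using DERIV_unique[OF z(3) der[of z]] z that by auto
    then have "\<bar>l\<bar> \<le> E" using db[of z] z that by auto
    then show ?thesis using z that by (simp add: abs_mult mult_left_mono)
  qed
  show ?thesis
  proof (cases "x < y")
    case True then show ?thesis using main[of x y] x y by (simp add: abs_minus_commute)
  next
    case False
    then show ?thesis using main[of y x] x y by (cases "x = y") auto
  qed
qed

lemma at01_nonbot: "x \<in> {0..1::real} \<Longrightarrow> at x within {0..1} \<noteq> bot"
proof -
  assume x: "x \<in> {0..1}"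
  consider "x = 0" | "0 < x" "x < 1" | "x = 1" using x by fastforce
  then show ?thesis
  proof cases
    case 1 then show ?thesis by (simp add: at_within_Icc_at_right)
  next
    case 2 then show ?thesis by (simp add: at_within_Icc_at)
  next
    case 3 then show ?thesis by (simp add: at_within_Icc_at_left)
  qed
qed

lemma deriv_bound01:
  fixes g :: "real \<Rightarrow> real"
  assumes d: "(g has_real_derivative dd) (at x within {0..1})" and x: "x \<in> {0..1}"
    and L: "\<And>y. y \<in> {0..1} \<Longrightarrow> \<bar>g y - g x\<bar> \<le> E * \<bar>y - x\<bar>"
  shows "\<bar>dd\<bar> \<le> E"
proof -
  have "((\<lambda>y. (g y - g x) / (y - x)) \<longlongrightarrow> dd) (at x within {0..1})"
    using d by (simp add: has_field_derivative_iff)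
  then have t: "((\<lambda>y. \<bar>(g y - g x) / (y - x)\<bar>) \<longlongrightarrow> \<bar>dd\<bar>) (at x within {0..1})"
    by (rule tendsto_rabs)
  have ev: "\<forall>\<^sub>F y in at x within {0..1}. \<bar>(g y - g x) / (y - x)\<bar> \<le> E"
    unfolding eventually_at_filter
  proof (intro always_eventually allI impI)
    fix y assume "y \<noteq> x" "y \<in> {0..1}"
    then show "\<bar>(g y - g x) / (y - x)\<bar> \<le> E" using L[of y] by (simp add: divide_le_eq abs_divide)
  qed
  show ?thesis
    by (rule tendsto_le[OF at01_nonbot[OF x] tendsto_const t ev])
qed

lemma sup_bound_facts:
  fixes g :: "real \<Rightarrow> real"
  assumes "\<And>t. t \<in> {0..1} \<Longrightarrow> \<bar>g t\<bar> \<le> E"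
  shows "sup_norm01 g \<le> E" "\<And>t. t \<in> {0..1} \<Longrightarrow> \<bar>g t\<bar> \<le> sup_norm01 g"
proof -
  have bdd: "bdd_above ((\<lambda>t. \<bar>g t\<bar>) ` {0..1})" by (rule bdd_aboveI2[where M=E]) (use assms in auto)
  show "sup_norm01 g \<le> E" unfolding sup_norm01_def by (rule cSUP_least) (use assms in auto)
  show "\<And>t. t \<in> {0..1} \<Longrightarrow> \<bar>g t\<bar> \<le> sup_norm01 g"
    unfolding sup_norm01_def by (rule cSUP_upper[OF _ bdd])
qed

lemma Dbound:
  fixes g f' d :: "real \<Rightarrow> real"
  assumes hyp: "\<forall>t\<in>{0..1}. (g has_real_derivative f' t) (at t within {0..1})"
    and der: "\<And>t. 0 < t \<Longrightarrow> t < 1 \<Longrightarrow> (g has_real_derivative d t) (at t)"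
    and db: "\<And>t. 0 < t \<Longrightarrow> t < 1 \<Longrightarrow> \<bar>d t\<bar> \<le> E"
  shows "sup_norm01 f' \<le> E" "\<And>x::real. x \<in> {0..1} \<Longrightarrow> \<bar>g x - g 0\<bar> \<le> sup_norm01 f' * x"
proof -
  have cont: "continuous_on {0..1} g" using hyp by (intro DERIV_continuous_on) auto
  have fb: "\<bar>f' t\<bar> \<le> E" if t: "t \<in> {0..1}" for t
    by (rule deriv_bound01[OF hyp[rule_format, OF t] t])
       (use lip01[OF cont der db] t in auto)
  note S = sup_bound_facts[of f' E, OF fb]
  show "sup_norm01 f' \<le> E" by (rule S(1))
  have der2: "(g has_real_derivative f' t) (at t)" if "0 < t" "t < 1" for t
    using hyp[rule_format, of t] that by (simp add: at_within_Icc_at)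
  fix x :: real assume x: "x \<in> {0..1}"
  have "\<bar>g x - g 0\<bar> \<le> sup_norm01 f' * \<bar>x - 0\<bar>"
    by (rule lip01[OF cont der2]) (use S(2) x in auto)
  then show "\<bar>g x - g 0\<bar> \<le> sup_norm01 f' * x" using x by simp
qed


lemma decay_deriv:
  assumes Q: "Q \<ge> 1"
  shows "\<exists>K\<ge>0. \<forall>c mu B. (\<forall>j<m. 1 \<le> mu j \<and> mu j \<le> Q) \<longrightarrow> (\<forall>u\<ge>0. \<bar>es c mu m u\<bar> \<le> B) \<longrightarrow>
            (\<forall>u\<ge>0. \<bar>es (\<lambda>j. - c j * mu j) mu m u\<bar> \<le> K * B * exp (- u / 2))"
proof -
  obtain C where C: "C \<ge> 0" and HC: "\<And>a c mu B. (\<forall>j<m. \<bar>mu j\<bar> \<le> Q) \<Longrightarrow> (\<forall>u\<in>{a..a+1}. \<bar>es c mu m u\<bar> \<le> B) \<Longrightarrow>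
           (\<forall>u\<in>{a..a+1}. \<bar>es (\<lambda>j. - c j * mu j) mu m u\<bar> \<le> C * B)"
    using LM[of 1 m Q] by auto
  obtain K where K: "K \<ge> 0" and HK: "\<And>c mu B. (\<forall>j<m. 1 \<le> mu j \<and> mu j \<le> Q) \<Longrightarrow> (\<forall>u\<ge>0. \<bar>es c mu m u\<bar> \<le> B) \<Longrightarrow>
            (\<forall>u\<ge>0. \<bar>es c mu m u\<bar> \<le> K * B * exp (- u / 2))"
    using decay[OF Q, of m] by blast
  have "\<forall>u\<ge>0. \<bar>es (\<lambda>j. - c j * mu j) mu m u\<bar> \<le> (K * C) * B * exp (- u / 2)"
    if hmu: "\<forall>j<m. 1 \<le> mu j \<and> mu j \<le> Q" and hB: "\<forall>u\<ge>0. \<bar>es c mu m u\<bar> \<le> B" for c mu B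
  proof -
    have hmu': "\<forall>j<m. \<bar>mu j\<bar> \<le> Q" using hmu by auto
    have "\<bar>es (\<lambda>j. - c j * mu j) mu m u\<bar> \<le> C * B" if u: "u \<ge> 0" for u
      using HC[OF hmu', of u c B] hB u by auto
    then have "\<forall>u\<ge>0. \<bar>es (\<lambda>j. - c j * mu j) mu m u\<bar> \<le> K * (C * B) * exp (- u / 2)"
      by (intro HK hmu) auto
    then show ?thesis by (simp add: algebra_simps)
  qed
  moreover have "K * C \<ge> 0" using K C by simp
  ultimately show ?thesis by blast
qed

lemma vanish:
  fixes lam a :: "nat \<Rightarrow> real"
  assumes sm: "strict_mono lam" and pos: "\<And>j. lam j > 0"
    and d: "((\<lambda>t. \<Sum>j<p. a j * t powr lam j) has_real_derivative dd) (at 0 within {0..1})"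
  shows "j < p \<Longrightarrow> lam j < 1 \<Longrightarrow> a j = 0"
proof (induction j rule: less_induct)
  case (less j)
  define g where "g = (\<lambda>t::real. \<Sum>j<p. a j * t powr lam j)"
  have g0: "g 0 = 0" by (simp add: g_def)
  have prev: "a i = 0" if "i < j" for i
  proof -
    have "lam i < lam j" using sm that by (simp add: strict_mono_less)
    then show ?thesis using less.IH[of i] that less.prems by auto
  qed
  define h where "h = (\<lambda>t::real. \<Sum>i<p. a i * t powr (lam i - lam j))"
  have lim1: "(h \<longlongrightarrow> (\<Sum>i<p. if i = j then a j else 0)) (at_right 0)"
    unfolding h_def
  proof (rule tendsto_sum)
    fix i assume "i \<in> {..<p}"
    show "((\<lambda>t. a i * t powr (lam i - lam j)) \<longlongrightarrow> (if i = j then a j else 0)) (at_right 0)"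
    proof (cases "i < j")
      case True then show ?thesis using prev[of i] by simp
    next
      case False
      show ?thesis
      proof (cases "i = j")
        case True
        have "\<forall>\<^sub>F t in at_right 0. a i * t powr (lam i - lam j) = a j"
          using True by (intro eventually_at_rightI[of 0 1]) auto
        then show ?thesis using True by (simp add: tendsto_eventually)
      next
        case ne: False
        then have "j < i" using False by simp
        then have e: "lam i - lam j > 0" using sm by (simp add: strict_mono_less)
        have "((\<lambda>t::real. t powr (lam i - lam j)) \<longlongrightarrow> 0) (at_right 0)"
          using e by real_asymp
        then show ?thesis using ne by (auto intro: tendsto_mult_right_zero)
      qed
    qed
  qed
  have s: "(\<Sum>i<p. if i = j then a j else 0) = a j" using less.prems by simp
  have "((\<lambda>t. (g t - g 0) / (t - 0)) \<longlongrightarrow> dd) (at 0 within {0..1})"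
    using d by (simp add: has_field_derivative_iff g_def)
  then have q: "((\<lambda>t. g t / t) \<longlongrightarrow> dd) (at_right 0)"
    by (simp add: g0 at_within_Icc_at_right)
  have e1: "((\<lambda>t::real. t powr (1 - lam j)) \<longlongrightarrow> 0) (at_right 0)"
    using less.prems by real_asymp
  have lim2: "((\<lambda>t. t powr (1 - lam j) * (g t / t)) \<longlongrightarrow> 0 * dd) (at_right 0)"
    by (rule tendsto_mult[OF e1 q])
  have ev: "\<forall>\<^sub>F t in at_right 0. t powr (1 - lam j) * (g t / t) = h t"
  proof -
    have "t powr (1 - lam j) * (g t / t) = h t" if t: "t > 0" for t :: real
    proof -
      have "t powr (1 - lam j) * (g t / t) = (\<Sum>i<p. a i * (t powr (1 - lam j) * t powr lam i / t))"
        unfolding g_def sum_divide_distrib sum_distrib_left by (rule sum.cong) (auto simp: algebra_simps)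
      also have "\<dots> = h t"
        unfolding h_def
      proof (rule sum.cong)
        fix i
        have "t powr (1 - lam j) * t powr lam i / t = t powr (1 - lam j + lam i - 1)"
          using t by (simp add: powr_add powr_diff)
        also have "\<dots> = t powr (lam i - lam j)" by (simp add: algebra_simps)
        finally show "a i * (t powr (1 - lam j) * t powr lam i / t) = a i * t powr (lam i - lam j)" by simp
      qed simp
      finally show ?thesis .
    qed
    then show ?thesis by (intro eventually_at_rightI[of 0 1]) auto
  qed
  have "(h \<longlongrightarrow> 0) (at_right 0)"
    using tendsto_cong[OF ev] lim2 by simp
  then have "a j = 0" using lim1 s tendsto_unique[OF trivial_limit_at_right_real] by metis
  then show ?case .
qed


lemma bf_shift:
  assumes "n k \<le> n (Suc k)"
  shows "block_fun lam n k c = (\<lambda>t. \<Sum>i<n (Suc k) - n k. c (n k + i) * t powr lam (n k + i))"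
proof
  fix t
  have e: "{n k..<n (Suc k)} = (\<lambda>i. n k + i) ` {..<n (Suc k) - n k}"
  proof (intro set_eqI iffI)
    fix x assume x: "x \<in> {n k..<n (Suc k)}"
    then have "x = n k + (x - n k)" "x - n k \<in> {..<n (Suc k) - n k}" by auto
    then show "x \<in> (\<lambda>i. n k + i) ` {..<n (Suc k) - n k}" by blast
  qed auto
  show "block_fun lam n k c t = (\<Sum>i<n (Suc k) - n k. c (n k + i) * t powr lam (n k + i))"
    unfolding block_fun_def e by (subst sum.reindex) (auto simp: inj_on_def)
qed

lemma es_rep:
  fixes lam :: "nat \<Rightarrow> real"
  assumes mk: "mk \<le> N" and t: "t > 0" and L: "Lam > 0"
  shows "(\<Sum>i<mk. c (n0 + i) * t powr lam (n0 + i)) =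
     es (\<lambda>i. if i < mk then c (n0 + i) else 0) (\<lambda>i. if i < mk then lam (n0 + i) / Lam else 1) N (- Lam * ln t)"
proof -
  have "es (\<lambda>i. if i < mk then c (n0 + i) else 0) (\<lambda>i. if i < mk then lam (n0 + i) / Lam else 1) N (- Lam * ln t)
      = (\<Sum>i<N. if i \<in> {..<mk} then c (n0 + i) * t powr lam (n0 + i) else 0)"
    unfolding es_def using t L by (intro sum.cong) (auto simp: powr_def)
  also have "\<dots> = (\<Sum>i\<in>{..<N} \<inter> {..<mk}. c (n0 + i) * t powr lam (n0 + i))"
    by (rule sum.inter_restrict[symmetric]) simp
  also have "{..<N} \<inter> {..<mk} = {..<mk}" using mk by auto
  finally show ?thesis by simp
qed

lemma es_rep_deriv:
  fixes lam :: "nat \<Rightarrow> real"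
  assumes mk: "mk \<le> N" and t: "t > 0" and L: "Lam > 0"
  shows "es (\<lambda>j. - (if j < mk then c (n0 + j) else 0) * (if j < mk then lam (n0 + j) / Lam else 1))
           (\<lambda>i. if i < mk then lam (n0 + i) / Lam else 1) N (- Lam * ln t)
       = - (t / Lam) * (\<Sum>i<mk. c (n0 + i) * (lam (n0 + i) * t powr (lam (n0 + i) - 1)))"
proof -
  have "es (\<lambda>j. - (if j < mk then c (n0 + j) else 0) * (if j < mk then lam (n0 + j) / Lam else 1))
           (\<lambda>i. if i < mk then lam (n0 + i) / Lam else 1) N (- Lam * ln t)
      = (\<Sum>i<N. if i \<in> {..<mk} then - (t / Lam) * (c (n0 + i) * (lam (n0 + i) * t powr (lam (n0 + i) - 1))) else 0)"
    unfolding es_def using t L by (intro sum.cong) (auto simp: powr_def exp_diff field_simps)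
  also have "\<dots> = (\<Sum>i\<in>{..<N} \<inter> {..<mk}. - (t / Lam) * (c (n0 + i) * (lam (n0 + i) * t powr (lam (n0 + i) - 1))))"
    by (rule sum.inter_restrict[symmetric]) simp
  also have "{..<N} \<inter> {..<mk} = {..<mk}" using mk by auto
  also have "(\<Sum>i\<in>{..<mk}. - (t / Lam) * (c (n0 + i) * (lam (n0 + i) * t powr (lam (n0 + i) - 1))))
     = - (t / Lam) * (\<Sum>i<mk. c (n0 + i) * (lam (n0 + i) * t powr (lam (n0 + i) - 1)))"
    by (rule sum_distrib_left[symmetric])
  finally show ?thesis .
qed

lemma bf_basic:
  fixes lam :: "nat \<Rightarrow> real"
  assumes pos: "\<And>j. lam j > 0"
  shows "block_fun lam n k c 0 = 0"
    "\<And>t. t \<in> {0..1} \<Longrightarrow> \<bar>block_fun lam n k c t\<bar> \<le> (\<Sum>j\<in>{n k..<n (Suc k)}. \<bar>c j\<bar>)"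
proof -
  show "block_fun lam n k c 0 = 0" by (simp add: block_fun_def)
  fix t :: real assume t: "t \<in> {0..1}"
  have "\<bar>block_fun lam n k c t\<bar> \<le> (\<Sum>j\<in>{n k..<n (Suc k)}. \<bar>c j * t powr lam j\<bar>)"
    unfolding block_fun_def by (rule sum_abs)
  also have "\<dots> \<le> (\<Sum>j\<in>{n k..<n (Suc k)}. \<bar>c j\<bar>)"
  proof (rule sum_mono)
    fix j
    have "t powr lam j \<le> 1" using t pos[of j] by (intro powr_le1) auto
    moreover have "t powr lam j \<ge> 0" by simp
    ultimately show "\<bar>c j * t powr lam j\<bar> \<le> \<bar>c j\<bar>"
      by (simp add: abs_mult mult_left_le)
  qed
  finally show "\<bar>block_fun lam n k c t\<bar> \<le> (\<Sum>j\<in>{n k..<n (Suc k)}. \<bar>c j\<bar>)" .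
qed

lemma M_facts:
  fixes lam :: "nat \<Rightarrow> real"
  assumes pos: "\<And>j. lam j > 0"
    and nz: "\<exists>t\<in>{0..1}. block_fun lam n k c t \<noteq> 0"
  shows "sup_norm01 (block_fun lam n k c) > 0"
    "\<And>t. t \<in> {0..1} \<Longrightarrow> \<bar>block_fun lam n k c t\<bar> \<le> sup_norm01 (block_fun lam n k c)"
proof -
  note S = sup_bound_facts[of "block_fun lam n k c" "\<Sum>j\<in>{n k..<n (Suc k)}. \<bar>c j\<bar>", OF bf_basic(2)[OF pos]]
  show "\<And>t. t \<in> {0..1} \<Longrightarrow> \<bar>block_fun lam n k c t\<bar> \<le> sup_norm01 (block_fun lam n k c)"
    using S(2) by blast
  obtain t where "t \<in> {0..1}" "block_fun lam n k c t \<noteq> 0" using nz by blast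
  then show "sup_norm01 (block_fun lam n k c) > 0" using S(2)[of t]
    by (metis zero_less_abs_iff order_less_le_trans)
qed


lemma large_block:
  fixes lam :: "nat \<Rightarrow> real" and n :: "nat \<Rightarrow> nat"
  assumes sm: "strict_mono lam" and pos: "\<And>j. lam j > 0"
    and nk: "n k < n (Suc k)" and mk: "n (Suc k) - n k \<le> N"
    and ratio: "lam (n (Suc k)) \<le> Q * lam (n k)"
    and L2: "lam (n k) \<ge> 2"
    and K1: "K1 \<ge> 0" and HK1: "\<And>c mu B. (\<forall>j<N. 1 \<le> mu j \<and> mu j \<le> Q) \<Longrightarrow> (\<forall>u\<ge>0. \<bar>es c mu N u\<bar> \<le> B) \<Longrightarrow>
            (\<forall>u\<ge>0. \<bar>es c mu N u\<bar> \<le> K1 * B * exp (- u / 2))"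
    and K2: "K2 \<ge> 0" and HK2: "\<And>c mu B. (\<forall>j<N. 1 \<le> mu j \<and> mu j \<le> Q) \<Longrightarrow> (\<forall>u\<ge>0. \<bar>es c mu N u\<bar> \<le> B) \<Longrightarrow>
            (\<forall>u\<ge>0. \<bar>es (\<lambda>j. - c j * mu j) mu N u\<bar> \<le> K2 * B * exp (- u / 2))"
    and Q1: "Q \<ge> 1"
    and hyp: "\<forall>t\<in>{0..1}. (block_fun lam n k c has_real_derivative f' t) (at t within {0..1})"
    and nz: "\<exists>t\<in>{0..1}. block_fun lam n k c t \<noteq> 0"
    and x0: "x0 \<in> {0..1}" and x0max: "\<bar>block_fun lam n k c x0\<bar> = sup_norm01 (block_fun lam n k c)"
  shows "sup_norm01 f' > 0 \<and> 1 - x0 \<le> (2 * ln (max K1 1) * K2) * (sup_norm01 (block_fun lam n k c) / sup_norm01 f')"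
proof -
  define Lam where "Lam = lam (n k)"
  define n0 where "n0 = n k"
  define mk where "mk = n (Suc k) - n k"
  define f where "f = block_fun lam n k c"
  define M where "M = sup_norm01 f"
  define D where "D = sup_norm01 f'"
  define cc where "cc = (\<lambda>i. if i < mk then c (n0 + i) else 0)"
  define mm where "mm = (\<lambda>i. if i < mk then lam (n0 + i) / Lam else 1)"
  have Lpos: "Lam > 0" using L2 by (simp add: Lam_def)
  have mkN: "mk \<le> N" using mk by (simp add: mk_def)
  have fdef: "f = (\<lambda>t. \<Sum>i<mk. c (n0 + i) * t powr lam (n0 + i))"
    unfolding f_def mk_def n0_def by (rule bf_shift) (use nk in simp)
  have Mpos: "M > 0" and Mb: "\<And>t. t \<in> {0..1} \<Longrightarrow> \<bar>f t\<bar> \<le> M"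
    using M_facts[OF pos nz] by (auto simp: M_def f_def)
  have f0: "f 0 = 0" unfolding f_def by (rule bf_basic(1)[OF pos])
  have mmb: "\<forall>j<N. 1 \<le> mm j \<and> mm j \<le> Q"
  proof (intro allI impI)
    fix j assume "j < N"
    show "1 \<le> mm j \<and> mm j \<le> Q"
    proof (cases "j < mk")
      case True
      have "lam n0 \<le> lam (n0 + j)" using sm by (simp add: strict_mono_less_eq)
      moreover have "lam (n0 + j) < lam (n (Suc k))"
        using sm True by (simp add: strict_mono_less mk_def n0_def)
      ultimately have a1: "Lam \<le> lam (n0 + j)" and a2: "lam (n0 + j) \<le> Q * Lam"
        using ratio by (auto simp: Lam_def n0_def)
      have "1 \<le> lam (n0 + j) / Lam" using a1 Lpos by simp
      moreover have "lam (n0 + j) / Lam \<le> Q" using a2 Lpos by (simp add: pos_divide_le_eq)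
      ultimately show ?thesis using True by (simp add: mm_def)
    qed (use Q1 in \<open>auto simp: mm_def\<close>)
  qed
  have rep: "f t = es cc mm N (- Lam * ln t)" if "t > 0" for t
    unfolding fdef cc_def mm_def using es_rep[OF mkN that Lpos, of c n0 lam] by simp
  have Gb: "\<forall>u\<ge>0. \<bar>es cc mm N u\<bar> \<le> M"
  proof (intro allI impI)
    fix u :: real assume u: "u \<ge> 0"
    have "es cc mm N u = f (exp (- u / Lam))" using rep[of "exp (- u / Lam)"] Lpos by simp
    moreover have "exp (- u / Lam) \<in> {0..1}" using u Lpos by auto
    ultimately show "\<bar>es cc mm N u\<bar> \<le> M" using Mb by auto
  qed
  have Dec1: "\<forall>u\<ge>0. \<bar>es cc mm N u\<bar> \<le> K1 * M * exp (- u / 2)" by (rule HK1[OF mmb Gb])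
  have Dec2: "\<forall>u\<ge>0. \<bar>es (\<lambda>j. - cc j * mm j) mm N u\<bar> \<le> K2 * M * exp (- u / 2)" by (rule HK2[OF mmb Gb])
  define fd where "fd = (\<lambda>t. \<Sum>i<mk. c (n0 + i) * (lam (n0 + i) * t powr (lam (n0 + i) - 1)))"
  have der: "(f has_real_derivative fd t) (at t)" if "0 < t" "t < 1" for t
    unfolding fdef fd_def using that by (auto intro!: derivative_eq_intros sum.cong)
  have fdb: "\<bar>fd t\<bar> \<le> Lam * K2 * M" if t: "0 < t" "t < 1" for t
  proof -
    define u where "u = - Lam * ln t"
    have lnt: "ln t < 0" using t by simp
    have u0: "u \<ge> 0" using mult_nonneg_nonpos[of Lam "ln t"] lnt Lpos by (simp add: u_def)
    have "es (\<lambda>j. - cc j * mm j) mm N u = - (t / Lam) * fd t"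
      unfolding u_def cc_def mm_def fd_def using es_rep_deriv[OF mkN t(1) Lpos, of c n0 lam] by simp
    then have "\<bar>es (\<lambda>j. - cc j * mm j) mm N u\<bar> = (t / Lam) * \<bar>fd t\<bar>"
      using t Lpos by (simp add: abs_mult)
    moreover have "\<bar>es (\<lambda>j. - cc j * mm j) mm N u\<bar> \<le> K2 * M * exp (- u / 2)"
      using Dec2 u0 by blast
    ultimately have "(t / Lam) * \<bar>fd t\<bar> \<le> K2 * M * exp (- u / 2)" by simp
    moreover have "exp (- u / 2) \<le> t"
    proof -
      have "- u / 2 = (Lam / 2) * ln t" by (simp add: u_def)
      also have "\<dots> \<le> 1 * ln t" using L2 lnt by (intro mult_right_mono_neg) (auto simp: Lam_def)
      finally have "exp (- u / 2) \<le> exp (ln t)" by simp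
      then show ?thesis using t by simp
    qed
    moreover have "K2 * M \<ge> 0" using K2 Mpos by simp
    ultimately have "(t / Lam) * \<bar>fd t\<bar> \<le> K2 * M * t"
      using mult_left_mono[of "exp (- u / 2)" t "K2 * M"] by linarith
    then show ?thesis using t Lpos by (simp add: field_simps)
  qed
  have hypf: "\<forall>t\<in>{0..1}. (f has_real_derivative f' t) (at t within {0..1})" using hyp by (simp add: f_def)
  have DE: "D \<le> Lam * K2 * M" unfolding D_def by (rule Dbound(1)[OF hypf der fdb])
  have Dlip: "\<bar>f x - f 0\<bar> \<le> D * x" if "x \<in> {0..1}" for x
    unfolding D_def by (rule Dbound(2)[OF hypf der fdb that])
  have fx0: "\<bar>f x0\<bar> = M" using x0max by (simp add: f_def M_def)
  have x0pos: "x0 > 0"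
  proof (rule ccontr)
    assume "\<not> x0 > 0" then have "x0 = 0" using x0 by auto
    then show False using fx0 f0 Mpos by simp
  qed
  have MDx: "M \<le> D * x0" using Dlip[OF x0] fx0 f0 by simp
  have D0: "D \<ge> 0"
  proof (rule ccontr)
    assume "\<not> D \<ge> 0"
    then have "D * x0 \<le> 0" using x0 by (intro mult_nonpos_nonneg) auto
    then show False using MDx Mpos by simp
  qed
  have "D * x0 \<le> D * 1" using x0 D0 by (intro mult_left_mono) auto
  then have MD: "M \<le> D" using MDx by simp
  have Dpos: "D > 0" using MD Mpos by simp
  define u0 where "u0 = - Lam * ln x0"
  have "ln x0 \<le> 0" using x0 x0pos by simp
  then have u0nn: "u0 \<ge> 0" using mult_nonneg_nonpos[of Lam "ln x0"] Lpos by (simp add: u0_def)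
  have "es cc mm N u0 = f x0" using rep[OF x0pos] by (simp add: u0_def)
  moreover have "\<bar>es cc mm N u0\<bar> \<le> K1 * M * exp (- u0 / 2)" using Dec1 u0nn by blast
  ultimately have "M \<le> K1 * M * exp (- u0 / 2)" using fx0 by simp
  then have "1 \<le> K1 * exp (- u0 / 2)" using Mpos by (simp add: field_simps)
  then have "exp (u0 / 2) \<le> K1" by (simp add: exp_minus field_simps)
  then have "exp (u0 / 2) \<le> max K1 1" by linarith
  then have "ln (exp (u0 / 2)) \<le> ln (max K1 1)" by (subst ln_le_cancel_iff) auto
  then have "u0 / 2 \<le> ln (max K1 1)" by simp
  then have u0b: "u0 \<le> 2 * ln (max K1 1)" by simp
  have "1 - x0 \<le> - ln x0" using ln_le_minus_one[OF x0pos] by simp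
  also have "\<dots> = u0 / Lam" using Lpos by (simp add: u0_def)
  also have "\<dots> \<le> 2 * ln (max K1 1) / Lam" using u0b Lpos by (simp add: divide_right_mono)
  also have "\<dots> = 2 * ln (max K1 1) * (1 / Lam)" by simp
  also have "\<dots> \<le> 2 * ln (max K1 1) * (K2 * M / D)"
  proof (rule mult_left_mono)
    show "1 / Lam \<le> K2 * M / D" using DE Dpos Lpos by (simp add: field_simps)
    show "0 \<le> 2 * ln (max K1 1)" by simp
  qed
  also have "\<dots> = (2 * ln (max K1 1) * K2) * (M / D)" by simp
  finally have "1 - x0 \<le> (2 * ln (max K1 1) * K2) * (M / D)" .
  then show ?thesis using Dpos by (simp add: M_def D_def f_def)
qed


lemma small_blocks:
  fixes lam :: "nat \<Rightarrow> real" and n :: "nat \<Rightarrow> nat"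
  assumes sm: "strict_mono lam" and pos: "\<And>j. lam j > 0"
  shows "\<exists>Cs>0. \<forall>k c f'. n (Suc k) \<le> p \<longrightarrow> n k \<le> n (Suc k) \<longrightarrow>
     (\<forall>t\<in>{0..1}. (block_fun lam n k c has_real_derivative f' t) (at t within {0..1})) \<longrightarrow>
     sup_norm01 f' \<le> Cs * sup_norm01 (block_fun lam n k c) \<and>
     ((\<exists>t\<in>{0..1}. block_fun lam n k c t \<noteq> 0) \<longrightarrow> sup_norm01 f' > 0)"
proof -
  define R where "R = lam p"
  obtain K0 where K0: "K0 \<ge> 0" and HK0: "\<And>a c mu B S. finite S \<Longrightarrow> S \<subseteq> {..<p} \<Longrightarrow> (\<forall>j<p. \<bar>mu j\<bar> \<le> R) \<Longrightarrow>
      (\<forall>u\<in>{a..a+1}. \<bar>es c mu p u\<bar> \<le> B) \<Longrightarrow>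
      (\<forall>u\<in>{a..a+1}. \<bar>es (\<lambda>j. c j * (\<Prod>l\<in>S. (mu l - mu j))) mu p u\<bar> \<le> K0 ^ card S * B)"
    using CB[of p R] by blast
  define P where "P = (\<lambda>j. \<bar>\<Prod>i\<in>{..<p} - {j}. (lam i - lam j)\<bar>)"
  have Ppos: "P j > 0" for j
  proof -
    have "(\<Prod>i\<in>{..<p} - {j}. (lam i - lam j)) \<noteq> 0"
      using sm by (auto simp: strict_mono_eq)
    then show ?thesis by (simp add: P_def)
  qed
  define W where "W = (\<lambda>j. lam j * (K0 ^ card ({..<p} - {j}) / P j))"
  have W0: "W j \<ge> 0" for j using pos[of j] K0 Ppos[of j] by (simp add: W_def)
  define Cs where "Cs = 1 + (\<Sum>j<p. W j)"
  have Cspos: "Cs > 0" using W0 by (simp add: Cs_def sum_nonneg add_pos_nonneg)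
  have lamR: "\<forall>j<p. \<bar>lam j\<bar> \<le> R" using sm pos by (auto simp: R_def strict_mono_less less_imp_le)
  have main: "sup_norm01 f' \<le> Cs * sup_norm01 (block_fun lam n k c) \<and>
     ((\<exists>t\<in>{0..1}. block_fun lam n k c t \<noteq> 0) \<longrightarrow> sup_norm01 f' > 0)"
    if np: "n (Suc k) \<le> p" and nn: "n k \<le> n (Suc k)"
      and hyp: "\<forall>t\<in>{0..1}. (block_fun lam n k c has_real_derivative f' t) (at t within {0..1})" for k c f'
  proof -
    define blk where "blk = {n k..<n (Suc k)}"
    define a where "a = (\<lambda>j. if j \<in> blk then c j else 0)"
    define g where "g = block_fun lam n k c"
    define M where "M = sup_norm01 g"
    have Mb: "\<And>t. t \<in> {0..1} \<Longrightarrow> \<bar>g t\<bar> \<le> M"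
      unfolding M_def g_def
      by (rule sup_bound_facts(2)[of "block_fun lam n k c" "\<Sum>j\<in>{n k..<n (Suc k)}. \<bar>c j\<bar>"])
         (use bf_basic(2)[where lam=lam, OF pos] in auto)
    have M0: "M \<ge> 0" using Mb[of 0] by simp
    have gdef: "g = (\<lambda>t. \<Sum>j<p. a j * t powr lam j)"
    proof
      fix t
      have "(\<Sum>j<p. a j * t powr lam j) = (\<Sum>j<p. if j \<in> blk then c j * t powr lam j else 0)"
        by (rule sum.cong) (auto simp: a_def)
      also have "\<dots> = sum (\<lambda>j. c j * t powr lam j) ({..<p} \<inter> blk)"
        by (rule sum.inter_restrict[symmetric]) simp
      also have "{..<p} \<inter> blk = blk" using np by (auto simp: blk_def)
      finally show "g t = (\<Sum>j<p. a j * t powr lam j)" by (simp add: g_def block_fun_def blk_def)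
    qed
    have Gb: "\<forall>u\<in>{0..0+1}. \<bar>es a lam p u\<bar> \<le> M"
    proof
      fix u :: real assume u: "u \<in> {0..0+1}"
      have "es a lam p u = g (exp (- u))" unfolding gdef es_def
        by (rule sum.cong) (auto simp: powr_def)
      moreover have "exp (- u) \<in> {0..1}" using u by auto
      ultimately show "\<bar>es a lam p u\<bar> \<le> M" using Mb by auto
    qed
    have coef: "\<bar>a j\<bar> \<le> K0 ^ card ({..<p} - {j}) * M / P j" if j: "j < p" for j
    proof -
      define S where "S = {..<p} - {j}"
      have "\<bar>es (\<lambda>l. a l * (\<Prod>i\<in>S. (lam i - lam l))) lam p 0\<bar> \<le> K0 ^ card S * M"
        using HK0[of S lam 0 a M] lamR Gb by (auto simp: S_def)
      moreover have "es (\<lambda>l. a l * (\<Prod>i\<in>S. (lam i - lam l))) lam p 0 = a j * (\<Prod>i\<in>S. (lam i - lam j))"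
      proof -
        have "es (\<lambda>l. a l * (\<Prod>i\<in>S. (lam i - lam l))) lam p 0 = (\<Sum>l<p. a l * (\<Prod>i\<in>S. (lam i - lam l)))"
          by (simp add: es_def)
        also have "\<dots> = a j * (\<Prod>i\<in>S. (lam i - lam j)) + (\<Sum>l\<in>{..<p} - {j}. a l * (\<Prod>i\<in>S. (lam i - lam l)))"
          by (rule sum.remove) (use j in auto)
        also have "(\<Sum>l\<in>{..<p} - {j}. a l * (\<Prod>i\<in>S. (lam i - lam l))) = 0"
        proof (rule sum.neutral, rule ballI)
          fix l assume l: "l \<in> {..<p} - {j}"
          have "(\<Prod>i\<in>S. (lam i - lam l)) = 0"
            by (rule prod_zero[of S "\<lambda>i. lam i - lam l"]) (use l in \<open>auto simp: S_def\<close>)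
          then show "a l * (\<Prod>i\<in>S. (lam i - lam l)) = 0" by simp
        qed
        finally show ?thesis by simp
      qed
      ultimately have "\<bar>a j\<bar> * P j \<le> K0 ^ card S * M" by (simp add: P_def S_def abs_mult)
      then show ?thesis using Ppos[of j] by (simp add: S_def field_simps)
    qed
    have d0: "((\<lambda>t. \<Sum>j<p. a j * t powr lam j) has_real_derivative f' 0) (at 0 within {0..1})"
      using hyp gdef g_def by auto
    have van: "a j = 0" if "j < p" "lam j < 1" for j
      by (rule vanish[OF sm pos d0 that])
    define fd where "fd = (\<lambda>t. \<Sum>j<p. a j * (lam j * t powr (lam j - 1)))"
    have der: "(g has_real_derivative fd t) (at t)" if "0 < t" "t < 1" for t
      unfolding gdef fd_def using that by (auto intro!: derivative_eq_intros sum.cong)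
    have fdb: "\<bar>fd t\<bar> \<le> Cs * M" if t: "0 < t" "t < 1" for t
    proof -
      have "\<bar>fd t\<bar> \<le> (\<Sum>j<p. \<bar>a j * (lam j * t powr (lam j - 1))\<bar>)" unfolding fd_def by (rule sum_abs)
      also have "\<dots> \<le> (\<Sum>j<p. W j * M)"
      proof (rule sum_mono)
        fix j assume j: "j \<in> {..<p}"
        show "\<bar>a j * (lam j * t powr (lam j - 1))\<bar> \<le> W j * M"
        proof (cases "a j = 0")
          case True then show ?thesis using W0[of j] M0 by simp
        next
          case False
          then have l1: "lam j \<ge> 1" using van[of j] j by force
          have tp: "t powr (lam j - 1) \<le> 1" using t l1 by (intro powr_le1) auto
          have "\<bar>a j * (lam j * t powr (lam j - 1))\<bar> = \<bar>a j\<bar> * (lam j * t powr (lam j - 1))"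
            using pos[of j] by (simp add: abs_mult)
          also have "\<dots> \<le> \<bar>a j\<bar> * lam j"
            using tp pos[of j] by (intro mult_left_mono) (auto intro: mult_left_le)
          also have "\<dots> \<le> (K0 ^ card ({..<p} - {j}) * M / P j) * lam j"
            using coef[of j] j pos[of j] by (intro mult_right_mono) auto
          also have "\<dots> = W j * M" by (simp add: W_def)
          finally show ?thesis .
        qed
      qed
      also have "\<dots> = (\<Sum>j<p. W j) * M" by (simp add: sum_distrib_right)
      also have "\<dots> \<le> Cs * M" using M0 by (intro mult_right_mono) (auto simp: Cs_def)
      finally show ?thesis .
    qed
    have hypg: "\<forall>t\<in>{0..1}. (g has_real_derivative f' t) (at t within {0..1})" using hyp by (simp add: g_def)
    have DE: "sup_norm01 f' \<le> Cs * M" by (rule Dbound(1)[OF hypg der fdb])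
    have Dpos: "sup_norm01 f' > 0" if nz: "\<exists>t\<in>{0..1}. g t \<noteq> 0"
    proof -
      obtain t where t: "t \<in> {0..1}" "g t \<noteq> 0" using nz by blast
      have g0: "g 0 = 0" unfolding g_def by (rule bf_basic(1)[where lam=lam, OF pos])
      have "\<bar>g t\<bar> \<le> sup_norm01 f' * t" using Dbound(2)[OF hypg der fdb t(1)] g0 by simp
      moreover have "\<bar>g t\<bar> > 0" using t by simp
      ultimately have "sup_norm01 f' * t > 0" by linarith
      then show ?thesis using t by (simp add: zero_less_mult_iff)
    qed
    show ?thesis using DE Dpos by (simp add: M_def g_def)
  qed
  show ?thesis using Cspos main by blast
qed


theorem corollary2p2:
  fixes lam :: "nat \<Rightarrow> real" and q :: real and N :: nat and n :: "nat \<Rightarrow> nat"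
  assumes "muntz_seq lam"
    and "quasi_lacunary lam q N n"
  shows "\<exists>A>0. \<exists>\<eta>>0. \<forall>k c f'.
           (\<forall>t\<in>{0..1}. (block_fun lam n k c has_real_derivative f' t) (at t within {0..1})) \<longrightarrow>
           (\<exists>t\<in>{0..1}. block_fun lam n k c t \<noteq> 0) \<longrightarrow>
           A * (sup_norm01 (block_fun lam n k c) / sup_norm01 f') \<le> \<eta> \<longrightarrow>
           (\<forall>x0\<in>{0..1}. \<bar>block_fun lam n k c x0\<bar> = sup_norm01 (block_fun lam n k c) \<longrightarrow>
              1 - A * (sup_norm01 (block_fun lam n k c) / sup_norm01 f') \<le> x0 \<and> x0 \<le> 1)"
proof -
  have sm: "strict_mono lam" and pos: "\<And>j. lam j > 0" using assms(1) by (auto simp: muntz_seq_def)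
  have q1: "q > 1" and N1: "N \<ge> 1" and n0: "n 0 = 0" and smn: "strict_mono n"
    and blk: "\<And>k. n (Suc k) - n k \<le> N"
    and rlo: "\<And>k. q \<le> lam (n (Suc k)) / lam (n k)"
    and rhi: "\<And>k. lam (n (Suc k)) / lam (n k) \<le> q ^ (2 * N)"
    using assms(2) by (auto simp: quasi_lacunary_def)
  define Q where "Q = q ^ (2 * N)"
  have Q1: "Q \<ge> 1" using q1 by (simp add: Q_def one_le_power)
  have ratio: "lam (n (Suc k)) \<le> Q * lam (n k)" for k
    using rhi[of k] pos[of "n k"] by (simp add: Q_def pos_divide_le_eq)
  have nk: "n k < n (Suc k)" for k using smn by (simp add: strict_mono_Suc_iff)
  obtain K1 where K1: "K1 \<ge> 0" and HK1: "\<And>c mu B. (\<forall>j<N. 1 \<le> mu j \<and> mu j \<le> Q) \<Longrightarrow> (\<forall>u\<ge>0. \<bar>es c mu N u\<bar> \<le> B) \<Longrightarrow>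
            (\<forall>u\<ge>0. \<bar>es c mu N u\<bar> \<le> K1 * B * exp (- u / 2))"
    using decay[OF Q1, of N] by blast
  obtain K2 where K2: "K2 \<ge> 0" and HK2: "\<And>c mu B. (\<forall>j<N. 1 \<le> mu j \<and> mu j \<le> Q) \<Longrightarrow> (\<forall>u\<ge>0. \<bar>es c mu N u\<bar> \<le> B) \<Longrightarrow>
            (\<forall>u\<ge>0. \<bar>es (\<lambda>j. - c j * mu j) mu N u\<bar> \<le> K2 * B * exp (- u / 2))"
    using decay_deriv[OF Q1, of N] by blast
  define A0 where "A0 = 2 * ln (max K1 1) * K2"
  have A00: "A0 \<ge> 0" using K2 by (simp add: A0_def)
  define A where "A = A0 + 1"
  have Apos: "A > 0" using A00 by (simp add: A_def)
  have grow: "lam (n k) \<ge> q ^ k * lam 0" for k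
  proof (induction k)
    case 0 then show ?case using n0 by simp
  next
    case (Suc k)
    have "q * lam (n k) \<le> lam (n (Suc k))" using rlo[of k] pos[of "n k"] by (simp add: pos_le_divide_eq)
    moreover have "q * (q ^ k * lam 0) \<le> q * lam (n k)" using Suc q1 by (intro mult_left_mono) auto
    ultimately show ?case by simp
  qed
  obtain k0 where k0: "2 / lam 0 < q ^ k0" using real_arch_pow[OF q1] by blast
  have k0big: "lam (n k0) \<ge> 2"
  proof -
    have "2 < q ^ k0 * lam 0" using k0 pos[of 0] by (simp add: divide_less_eq)
    then show ?thesis using grow[of k0] by simp
  qed
  define p where "p = n k0"
  obtain Cs where Cs: "Cs > 0" and HCs: "\<And>k c f'. n (Suc k) \<le> p \<Longrightarrow> n k \<le> n (Suc k) \<Longrightarrow>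
     (\<forall>t\<in>{0..1}. (block_fun lam n k c has_real_derivative f' t) (at t within {0..1})) \<Longrightarrow>
     sup_norm01 f' \<le> Cs * sup_norm01 (block_fun lam n k c) \<and>
     ((\<exists>t\<in>{0..1}. block_fun lam n k c t \<noteq> 0) \<longrightarrow> sup_norm01 f' > 0)"
    using small_blocks[OF sm pos, where p=p and n=n] by blast
  define eta where "eta = A / (2 * Cs)"
  have etapos: "eta > 0" using Apos Cs by (simp add: eta_def)
  have "\<forall>k c f'.
           (\<forall>t\<in>{0..1}. (block_fun lam n k c has_real_derivative f' t) (at t within {0..1})) \<longrightarrow>
           (\<exists>t\<in>{0..1}. block_fun lam n k c t \<noteq> 0) \<longrightarrow>
           A * (sup_norm01 (block_fun lam n k c) / sup_norm01 f') \<le> eta \<longrightarrow>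
           (\<forall>x0\<in>{0..1}. \<bar>block_fun lam n k c x0\<bar> = sup_norm01 (block_fun lam n k c) \<longrightarrow>
              1 - A * (sup_norm01 (block_fun lam n k c) / sup_norm01 f') \<le> x0 \<and> x0 \<le> 1)"
  proof (intro allI impI ballI)
    fix k c f' x0
    assume hyp: "\<forall>t\<in>{0..1}. (block_fun lam n k c has_real_derivative f' t) (at t within {0..1})"
      and nz: "\<exists>t\<in>{0..1}. block_fun lam n k c t \<noteq> 0"
      and small: "A * (sup_norm01 (block_fun lam n k c) / sup_norm01 f') \<le> eta"
      and x0: "x0 \<in> {0..1}"
      and x0max: "\<bar>block_fun lam n k c x0\<bar> = sup_norm01 (block_fun lam n k c)"
    define M where "M = sup_norm01 (block_fun lam n k c)"
    define D where "D = sup_norm01 f'"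
    have Mpos: "M > 0" using M_facts(1)[OF pos nz] by (simp add: M_def)
    show "1 - A * (sup_norm01 (block_fun lam n k c) / sup_norm01 f') \<le> x0 \<and> x0 \<le> 1"
    proof (cases "lam (n k) \<ge> 2")
      case True
      have LB: "D > 0 \<and> 1 - x0 \<le> A0 * (M / D)"
        unfolding A0_def M_def D_def
        by (rule large_block[OF sm pos nk blk ratio True K1 HK1 K2 HK2 Q1 hyp nz x0 x0max])
      then have "A0 * (M / D) \<le> A * (M / D)" using Mpos by (intro mult_right_mono) (auto simp: A_def)
      then show ?thesis using LB x0 by (auto simp: M_def D_def)
    next
      case False
      have "k < k0"
      proof (rule ccontr)
        assume "\<not> k < k0"
        then have "n k0 \<le> n k" using smn by (simp add: strict_mono_less_eq)
        then have "lam (n k0) \<le> lam (n k)" using sm by (simp add: strict_mono_less_eq)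
        then show False using False k0big by simp
      qed
      then have "n (Suc k) \<le> p" using smn by (simp add: p_def strict_mono_less_eq)
      then have SB: "D \<le> Cs * M \<and> D > 0"
        using HCs[OF _ less_imp_le[OF nk] hyp] nz by (auto simp: M_def D_def)
      have "A / Cs \<le> A * (M / D)"
      proof -
        have "1 / Cs \<le> M / D" using SB Cs Mpos by (simp add: field_simps)
        then show ?thesis using Apos by (simp add: mult_left_mono divide_inverse)
      qed
      also have "\<dots> \<le> eta" using small by (simp add: M_def D_def)
      finally have "A / Cs \<le> A / (2 * Cs)" by (simp add: eta_def)
      then have False using Apos Cs by (simp add: field_simps)
      then show ?thesis ..
    qed
  qed
  then show ?thesis using Apos etapos by blast
qed

end
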